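(* Let $p$ be a prime and let $n\in\mathcal{M}_p^{(2)}$. If $q$ is a prime with $q<p$ and $q\mid n$, then $q\in\{2,3,7,43\}$.
   Context: For positive integers $k,n$ let $S_k(n)=\sum_{i=1}^{n} i^k$. For an integer $a$, $\mathcal{M}_a$ denotes the set of positive integers $n$ such that $S_n(n)\equiv a\pmod{n}$. For a prime $p$, $\mathcal{M}_p^{(2)}=\{n\in\mathcal{M}_p : p^2\mid n,\ p^3\nmid n\}$. *)

theory Defs
  imports "HOL-Number_Theory.Number_Theory"
begin

definition S :: "nat \<Rightarrow> nat \<Rightarrow> int" where
  "S k n = (\<Sum>i=1..n. int i ^ k)"

definition M :: "int \<Rightarrow> nat set" where
  "M a = {n. n > 0 \<and> [S n n = a] (mod int n)}"

definition M2 :: "nat \<Rightarrow> nat set" where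
  "M2 p = {n \<in> M (int p). p^2 dvd n \<and> \<not> p^3 dvd n}"

end

theory Submission
  imports Defs "HOL-Number_Theory.Residue_Primitive_Roots"
begin

lemma block_sum:
  fixes q n :: nat
  shows "[(\<Sum>i=1..k*q. i^n) = k * (\<Sum>j=1..q. j^n)] (mod q)"
proof (induction k)
  case 0
  then show ?case by simp
next
  case (Suc k)
  have "(\<Sum>i=1..Suc k*q. i^n) = (\<Sum>i=1..k*q + q. i^n)" by (simp add: add.commute)
  also have "\<dots> = (\<Sum>i=1..k*q. i^n) + (\<Sum>i=k*q+1..k*q+q. i^n)"
    by (rule sum.ub_add_nat) simp
  also have "(\<Sum>i=k*q+1..k*q+q. i^n) = (\<Sum>j=1..q. (j + k*q)^n)"
    using sum.shift_bounds_cl_nat_ivl[of "\<lambda>i. i^n" 1 "k*q" q] by (simp add: add.commute)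
  finally have e: "(\<Sum>i=1..Suc k*q. i^n) = (\<Sum>i=1..k*q. i^n) + (\<Sum>j=1..q. (j + k*q)^n)" .
  have "[(\<Sum>j=1..q. (j + k*q)^n) = (\<Sum>j=1..q. j^n)] (mod q)"
  proof (rule cong_sum)
    fix j
    have "[j + k*q = j + 0] (mod q)" by (intro cong_add) (auto simp: cong_0_iff)
    then show "[(j + k*q)^n = j^n] (mod q)" using cong_pow by fastforce
  qed
  then have "[(\<Sum>i=1..k*q. i^n) + (\<Sum>j=1..q. (j + k*q)^n) = k * (\<Sum>j=1..q. j^n) + (\<Sum>j=1..q. j^n)] (mod q)"
    using Suc.IH cong_add by blast
  then show ?case using e by (simp add: algebra_simps)
qed

lemma perm_sum:
  fixes q g n :: nat
  assumes "prime q" "coprime q g"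
  shows "[g^n * (\<Sum>j\<in>{1..<q}. j^n) = (\<Sum>j\<in>{1..<q}. j^n)] (mod q)"
proof -
  define f where "f = (\<lambda>j. g*j mod q)"
  have q0: "q > 1" using assms prime_gt_1_nat by auto
  have inj: "inj_on f {1..<q}"
  proof
    fix a b assume a: "a \<in> {1..<q}" and b: "b \<in> {1..<q}" and e: "f a = f b"
    then have "[g*a = g*b] (mod q)" by (simp add: f_def cong_def)
    then have "[a = b] (mod q)" using assms(2) cong_mult_lcancel_nat
      by (metis coprime_commute)
    then show "a = b" using a b by (simp add: cong_def)
  qed
  have sub: "f ` {1..<q} \<subseteq> {1..<q}"
  proof
    fix x assume "x \<in> f ` {1..<q}"
    then obtain j where j: "j \<in> {1..<q}" "x = g*j mod q" by (auto simp: f_def)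
    have "\<not> q dvd j" using j by (auto dest: dvd_imp_le)
    moreover have "\<not> q dvd g" using assms q0
      by (metis coprime_absorb_left nat_dvd_1_iff_1 not_one_less_zero less_irrefl_nat) 
    ultimately have "\<not> q dvd g*j" using assms(1) prime_dvd_mult_iff by blast
    then have "x \<noteq> 0" using j by (simp add: dvd_eq_mod_eq_0)
    moreover have "x < q" using j q0 by simp
    ultimately show "x \<in> {1..<q}" by simp
  qed
  have img: "f ` {1..<q} = {1..<q}" using endo_inj_surj[OF _ sub inj] by simp
  have "(\<Sum>j\<in>{1..<q}. j^n) = (\<Sum>j\<in>f ` {1..<q}. j^n)" using img by simp
  also have "\<dots> = (\<Sum>j\<in>{1..<q}. (f j)^n)" using sum.reindex[OF inj] by simp
  finally have e: "(\<Sum>j\<in>{1..<q}. j^n) = (\<Sum>j\<in>{1..<q}. (f j)^n)" .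
  have "[(\<Sum>j\<in>{1..<q}. (g*j)^n) = (\<Sum>j\<in>{1..<q}. (f j)^n)] (mod q)"
    by (intro cong_sum) (simp add: f_def cong_def power_mod)
  moreover have "(\<Sum>j\<in>{1..<q}. (g*j)^n) = g^n * (\<Sum>j\<in>{1..<q}. j^n)"
    by (simp add: power_mult_distrib sum_distrib_left)
  ultimately show ?thesis using e by simp
qed

lemma power_sum_zero:
  fixes q n :: nat
  assumes "prime q" "\<not> (q - 1) dvd n"
  shows "q dvd (\<Sum>j\<in>{1..<q}. j^n)"
proof (rule ccontr)
  assume nd: "\<not> q dvd (\<Sum>j\<in>{1..<q}. j^n)"
  obtain g where g: "residue_primroot q g" using prime_primitive_root_exists[OF prime_gt_1_nat[OF assms(1)] assms(1)] by blast
  then have cop: "coprime q g" and ord: "ord q g = q - 1"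
    using assms(1) by (auto simp: residue_primroot_def totient_prime)
  have c: "[g^n * (\<Sum>j\<in>{1..<q}. j^n) = 1 * (\<Sum>j\<in>{1..<q}. j^n)] (mod q)"
    using perm_sum[OF assms(1) cop] by simp
  have "coprime (\<Sum>j\<in>{1..<q}. j^n) q"
    using nd assms(1) by (metis coprime_commute prime_imp_coprime)
  then have "[g^n = 1] (mod q)" using c cong_mult_rcancel_nat by blast
  then have "ord q g dvd n" using ord_divides by blast
  then show False using ord assms(2) by simp
qed

lemma key:
  fixes q n p :: nat
  assumes q: "prime q" and qn: "q dvd n" and n0: "n > 0"
    and c: "[(\<Sum>i=1..n. i^n) = p] (mod n)" and qp: "\<not> q dvd p"
  shows "(q - 1) dvd n \<and> \<not> q^2 dvd n"
proof -
  obtain k where k: "n = k*q" using qn by (metis dvd_def mult.commute)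
  have cq: "[(\<Sum>i=1..n. i^n) = p] (mod q)" using c qn cong_dvd_modulus_nat by blast
  have b: "[(\<Sum>i=1..n. i^n) = k * (\<Sum>j=1..q. j^n)] (mod q)" using block_sum[where k=k and q=q and n=n] k by simp
  have q1: "q \<ge> 1" using prime_gt_1_nat[OF q] by simp
  have split: "(\<Sum>j=1..q. j^n) = (\<Sum>j\<in>{1..<q}. j^n) + q^n"
  proof -
    have "{1..q} = insert q {1..<q}" using q1 by auto
    then show ?thesis by (simp add: add.commute)
  qed
  have qq: "q dvd q^n" using n0 by (simp add: dvd_power)
  have zero: False if "q dvd k * (\<Sum>j=1..q. j^n)"
  proof -
    have "[(\<Sum>i=1..n. i^n) = 0] (mod q)" using b that by (metis cong_0_iff cong_trans)
    then have "[p = 0] (mod q)" using cq by (metis cong_sym cong_trans)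
    then show False using qp by (simp add: cong_0_iff)
  qed
  have A: "(q - 1) dvd n"
  proof (rule ccontr)
    assume "\<not> (q - 1) dvd n"
    then have "q dvd (\<Sum>j\<in>{1..<q}. j^n)" using power_sum_zero q by blast
    then have "q dvd (\<Sum>j=1..q. j^n)" using split qq by simp
    then show False using zero by simp
  qed
  have B: "\<not> q^2 dvd n"
  proof
    assume "q^2 dvd n"
    then have "q*q dvd k*q" using k by (simp add: power2_eq_square)
    then have "q dvd k" using q1 by (simp add: mult.commute)
    then show False using zero by simp
  qed
  show ?thesis using A B by simp
qed

lemma dvd_prime_cases: "prime (r::nat) \<Longrightarrow> d dvd r \<Longrightarrow> d = 1 \<or> d = r"
  by (simp add: prime_nat_iff)
lemma enum1806:
  fixes d :: nat assumes "d dvd 1806"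
  shows "d \<in> {1,2,3,6,7,14,21,42,43,86,129,258,301,602,903,1806}"
proof -
  have "d dvd 2 * (3 * (7 * 43))" using assms by simp
  then obtain a b where ab: "d = a*b" "a dvd 2" "b dvd 3*(7*43)" using division_decomp by blast
  then obtain c e where ce: "b = c*e" "c dvd 3" "e dvd 7*43" using division_decomp by blast
  then obtain f g where fg: "e = f*g" "f dvd 7" "g dvd 43" using division_decomp by blast
  have "a = 1 \<or> a = 2" using ab(2) dvd_prime_cases[of 2] by simp
  moreover have "c = 1 \<or> c = 3" using ce(2) dvd_prime_cases[of 3] by simp
  moreover have "f = 1 \<or> f = 7" using fg(2) dvd_prime_cases[of 7] by simp
  moreover have "g = 1 \<or> g = 43" using fg(3) dvd_prime_cases[of 43] by simp
  ultimately show ?thesis using ab ce fg by auto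
qed
lemma final:
  fixes q :: nat assumes "prime q" "(q - 1) dvd 1806"
  shows "q \<in> {2,3,7,43}"
proof -
  have "q - 1 \<in> {1,2,3,6,7,14,21,42,43,86,129,258,301,602,903,1806}" using enum1806 assms(2) .
  moreover obtain d where "q = d + 1" using prime_ge_2_nat assms(1) by (metis add.commute le_Suc_ex one_add_one add_Suc_right plus_1_eq_Suc)
  ultimately have "q \<in> {2,3,4,7,8,15,22,43,44,87,130,259,302,603,904,1807}" by auto
  moreover have np: "\<And>k. k dvd q \<Longrightarrow> 1<k \<Longrightarrow> k<q \<Longrightarrow> False" using assms(1) prime_nat_iff by auto
  ultimately show ?thesis using np[of 2] np[of 3] np[of 7] np[of 13] by auto
qed
lemma div1806:
  fixes m :: nat
  assumes m: "m > 0" and h: "\<And>r. prime r \<Longrightarrow> r dvd m \<Longrightarrow> r \<in> {2,3,7,43} \<and> \<not> r^2 dvd m"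
  shows "m dvd 1806"
proof (rule multiplicity_le_imp_dvd)
  show "m \<noteq> 0" using m by simp
  fix r :: nat assume r: "prime r"
  show "multiplicity r m \<le> multiplicity r 1806"
  proof (cases "r dvd m")
    case False then show ?thesis by (simp add: not_dvd_imp_multiplicity_0)
  next
    case True
    then have hr: "r \<in> {2,3,7,43}" "\<not> r^2 dvd m" using h r by auto
    have "multiplicity r m < 2" using hr(2) power_dvd_iff_le_multiplicity[where p=r and n=2 and x=m] m prime_gt_1_nat[OF r] by auto
    moreover have "r dvd 1806" using hr(1) by auto
    then have "1 \<le> multiplicity r 1806" using power_dvd_iff_le_multiplicity[where p=r and n=1 and x=1806] prime_gt_1_nat[OF r] by auto
    ultimately show ?thesis by simp
  qed
qed

theorem mainTheorem5:
  fixes p q n :: nat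
  assumes "prime p" and "n \<in> M2 p" and "prime q" and "q < p" and "q dvd n"
  shows "q \<in> {2, 3, 7, 43}"
proof -
  have n0: "n > 0" and cS: "[S n n = int p] (mod int n)"
    using assms(2) by (auto simp: M2_def M_def)
  have "S n n = int (\<Sum>i=1..n. i^n)" by (simp add: S_def)
  then have c: "[(\<Sum>i=1..n. i^n) = p] (mod n)" using cS by (metis cong_int_iff)
  have K: "(r - 1) dvd n \<and> \<not> r^2 dvd n" if "prime r" "r < p" "r dvd n" for r
  proof (rule key[OF that(1) that(3) n0 c])
    show "\<not> r dvd p"
    proof
      assume "r dvd p"
      then have "r = 1 \<or> r = p" using dvd_prime_cases[OF assms(1)] by blast
      then show False using that prime_gt_1_nat[OF that(1)] by auto
    qed
  qed
  have "\<forall>r. prime r \<longrightarrow> r < p \<longrightarrow> r dvd n \<longrightarrow> r \<in> {2,3,7,43}" (is "\<forall>r. ?P r")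
  proof
    fix r show "?P r"
    proof (induction r rule: less_induct)
      case (less r)
      show ?case
      proof (intro impI)
        assume r: "prime r" "r < p" "r dvd n"
        have Kr: "(r - 1) dvd n" using K[OF r] by blast
        have m0: "r - 1 > 0" using prime_gt_1_nat[OF r(1)] by simp
        have "(r - 1) dvd 1806"
        proof (rule div1806[OF m0])
          fix t assume t: "prime t" "t dvd r - 1"
          have "t \<le> r - 1" using dvd_imp_le[OF t(2) m0] .
          then have tl: "t < r" using m0 by linarith
          have tp: "t < p" using tl r(2) by linarith
          have tn: "t dvd n" using t(2) Kr dvd_trans by blast
          have "t \<in> {2,3,7,43}" using less[OF tl] t(1) tp tn by blast
          moreover have "\<not> t^2 dvd r - 1"
          proof
            assume "t^2 dvd r - 1"
            then have "t^2 dvd n" using Kr by (rule dvd_trans)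
            then show False using K[OF t(1) tp tn] by blast
          qed
          ultimately show "t \<in> {2,3,7,43} \<and> \<not> t^2 dvd r - 1" by blast
        qed
        then show "r \<in> {2,3,7,43}" using final r(1) by blast
      qed
    qed
  qed
  then show ?thesis using assms(3-5) by blast
qed

end
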